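(* Let $D$ be a Euclidean domain with fraction field $K$. Then $D$ is Bonaccian. More precisely, if $f$ is any Euclidean function on $D$ and $a,b \in D$ are nonzero with $f(a) \leq f(b)$, then $a/b$ is $D$-Egyptian.
   Context: A Euclidean function on an integral domain $D$ is a function $f: D\setminus\{0\} \to \mathbb{Z}$ such that for all nonzero $a,b \in D$: (1) $f(ab) \geq f(a)$, and (2) there exist $q,r \in D$ with $b = aq + r$ and either $r=0$ or $f(r) < f(a)$. A Euclidean domain is an integral domain admitting a Euclidean function. An element of $K$ is $D$-Egyptian if it is a sum of reciprocals of distinct nonzero elements of $D$. $D$ is Bonaccian if for every nonzero $\alpha \in K$, either $\alpha$ or $\alpha^{-1}$ is $D$-Egyptian. *)

theory Defs
  imports "HOL-Computational_Algebra.Fraction_Field"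
begin

text \<open>The integral domain D is the type 'a::idom; its fraction field K is 'a fract.
  Elements of D embed into K as Fract d 1.\<close>

definition euclidean_function :: "('a::idom \<Rightarrow> int) \<Rightarrow> bool" where
  "euclidean_function f \<longleftrightarrow>
     (\<forall>a b. a \<noteq> 0 \<longrightarrow> b \<noteq> 0 \<longrightarrow>
        f (a * b) \<ge> f a \<and>
        (\<exists>q r. b = a * q + r \<and> (r = 0 \<or> f r < f a)))"

definition euclidean_domain :: "'a::idom itself \<Rightarrow> bool" where
  "euclidean_domain (_ :: 'a itself) \<longleftrightarrow> (\<exists>f :: 'a \<Rightarrow> int. euclidean_function f)"

definition egyptian :: "'a::idom fract \<Rightarrow> bool" where
  "egyptian \<alpha> \<longleftrightarrow>
     (\<exists>S :: 'a set. finite S \<and> 0 \<notin> S \<and> \<alpha> = (\<Sum>d\<in>S. inverse (Fract d 1)))"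

definition bonaccian :: "'a::idom itself \<Rightarrow> bool" where
  "bonaccian (_ :: 'a itself) \<longleftrightarrow>
     (\<forall>\<alpha> :: 'a fract. \<alpha> \<noteq> 0 \<longrightarrow> egyptian \<alpha> \<or> egyptian (inverse \<alpha>))"

end

theory Submission
  imports Defs
begin


lemma ef_mono: "euclidean_function f \<Longrightarrow> a \<noteq> 0 \<Longrightarrow> b \<noteq> 0 \<Longrightarrow> f (a*b) \<ge> f a"
  unfolding euclidean_function_def by blast

lemma ef_div: "euclidean_function f \<Longrightarrow> a \<noteq> 0 \<Longrightarrow> b \<noteq> 0 \<Longrightarrow> \<exists>q r. b = a*q + r \<and> (r = 0 \<or> f r < f a)"
  unfolding euclidean_function_def by blast

lemma ef_one: "euclidean_function f \<Longrightarrow> (x::'a::idom) \<noteq> 0 \<Longrightarrow> f 1 \<le> f x"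
  using ef_mono[of f 1 x] by simp

lemma ef_neg: "euclidean_function f \<Longrightarrow> (x::'a::idom) \<noteq> 0 \<Longrightarrow> f (-x) = f x"
  using ef_mono[of f x "-1"] ef_mono[of f "-x" "-1"] by simp

lemma greedy:
  fixes f :: "'a::idom \<Rightarrow> int"
  assumes ef: "euclidean_function f"
  shows "a \<noteq> 0 \<Longrightarrow> b \<noteq> 0 \<Longrightarrow> f a \<le> f b \<Longrightarrow>
     \<exists>xs. 0 \<notin> set xs \<and> Fract a b = (\<Sum>x\<leftarrow>xs. inverse (Fract x 1))"
proof (induction "nat (f a - f 1)" arbitrary: a b rule: less_induct)
  case less
  obtain q r where qr: "b = a*q + r" "r = 0 \<or> f r < f a" using ef_div[OF ef less.prems(1,2)] by blast
  have q0: "q \<noteq> 0"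
  proof
    assume "q = 0"
    then have "b = r" using qr by simp
    then show False using qr less.prems by auto
  qed
  show ?case
  proof (cases "r = 0")
    case True
    then have "Fract a b = inverse (Fract q 1)"
      using qr less.prems q0 by (simp add: eq_fract)
    then show ?thesis using q0 by (intro exI[of _ "[q]"]) simp
  next
    case False
    have fr: "f r < f a" using qr False by simp
    have "f a \<le> f (b*q)" using ef_mono[OF ef less.prems(2) q0] less.prems(3) by simp
    then have le: "f (-r) \<le> f (b*q)" using ef_neg[OF ef False] fr by simp
    have lt: "nat (f (-r) - f 1) < nat (f a - f 1)"
      using ef_neg[OF ef False] fr ef_one[OF ef False] by simp
    obtain xs where xs: "0 \<notin> set xs" "Fract (-r) (b*q) = (\<Sum>x\<leftarrow>xs. inverse (Fract x 1))"
      using less.hyps[OF lt _ _ le] False q0 less.prems by auto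
    have "inverse (Fract q 1) + Fract (-r) (b*q) = Fract (1*(b*q) + (-r)*q) (q*(b*q))"
      using q0 less.prems by simp
    also have "\<dots> = Fract a b"
    proof -
      have "(1*(b*q) + (-r)*q)*b = a*(q*(b*q))" by (simp add: qr(1) algebra_simps)
      then show ?thesis using q0 less.prems by (simp add: eq_fract)
    qed
    finally have "Fract a b = inverse (Fract q 1) + Fract (-r) (b*q)" by simp
    then show ?thesis using xs q0 by (intro exI[of _ "q # xs"]) simp
  qed
qed



lemma greedy_nat:
  "\<And>q N. q > 0 \<Longrightarrow> N \<ge> 1 \<Longrightarrow> p * N < q \<Longrightarrow>
    \<exists>S. finite S \<and> (\<forall>n\<in>S. n > N) \<and> (\<Sum>n\<in>S. 1 / (of_nat n :: 'b::linordered_field)) = (of_nat p :: 'b::linordered_field) / (of_nat q :: 'b::linordered_field)"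
proof (induction p rule: less_induct)
  case (less p)
  show ?case
  proof (cases "p = 0")
    case True
    then show ?thesis by (intro exI[of _ "{}"]) simp
  next
    case False
    define n where "n = (LEAST n. q \<le> n * p)"
    have ex: "q \<le> q * p" using False by simp
    have n1: "q \<le> n * p" unfolding n_def by (rule LeastI[of _ q]) (rule ex)
    have n2: "(n - 1) * p < q"
    proof (cases n)
      case 0 then show ?thesis using less.prems by simp
    next
      case (Suc m)
      have "\<not> q \<le> m * p" using not_less_Least[of m "\<lambda>n. q \<le> n * p"] Suc n_def by simp
      then show ?thesis using Suc by simp
    qed
    have pq: "p < q" using less.prems False
      by (metis le_less_trans mult.right_neutral mult_le_mono2)
    have nN: "n > N"
    proof (rule ccontr)
      assume "\<not> N < n"
      then have "n * p \<le> N * p" by (intro mult_le_mono1) simp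
      moreover have "N * p < q" using less.prems(3) by (simp add: mult.commute)
      ultimately show False using n1 by linarith
    qed
    have n0: "n \<ge> 1" using nN less.prems by simp
    define p' where "p' = n * p - q"
    have np: "n * p = (n - 1) * p + p" using n0
      by (metis Suc_diff_1 add.commute less_le_trans mult_Suc zero_less_one)
    have p'lt: "p' < p" unfolding p'_def
    proof -
      have "n * p < p + q" using n2 np by linarith
      then show "n * p - q < p" using less_diff_conv2[OF n1] by simp
    qed
    have cond: "p' * n < q * n" using p'lt pq n0 by simp
    obtain S where S: "finite S" "\<forall>m\<in>S. m > n" "(\<Sum>m\<in>S. 1 / (of_nat m :: 'b::linordered_field)) = (of_nat p' :: 'b::linordered_field) / (of_nat (q * n) :: 'b::linordered_field)"
      using less.IH[OF p'lt, of "q * n" n] cond less.prems n0 by auto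
    have nS: "n \<notin> S" using S(2) by auto
    have "(\<Sum>m\<in>insert n S. 1 / (of_nat m :: 'b::linordered_field)) = 1 / (of_nat n :: 'b::linordered_field) + (of_nat p' :: 'b::linordered_field) / (of_nat (q * n) :: 'b::linordered_field)"
      using S nS by simp
    also have "\<dots> = (of_nat p :: 'b::linordered_field) / (of_nat q :: 'b::linordered_field)"
    proof -
      have "(of_nat p' :: 'b::linordered_field) = (of_nat n :: 'b::linordered_field) * (of_nat p :: 'b::linordered_field) - (of_nat q :: 'b::linordered_field)" unfolding p'_def using n1 by (simp add: of_nat_diff)
      then show ?thesis using n0 less.prems by (simp add: field_simps)
    qed
    finally show ?thesis using S nN by (intro exI[of _ "insert n S"]) auto
  qed
qed

lemma block_half:
  assumes "m \<ge> 1"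
  shows "(\<Sum>k\<in>{m..<2*m}. 1 / (of_nat k :: 'b::linordered_field)) \<ge> 1/2"
proof -
  have "(of_nat (card {m..<2*m}) :: 'b::linordered_field) * (1 / (of_nat (2*m) :: 'b::linordered_field)) \<le> (\<Sum>k\<in>{m..<2*m}. 1 / (of_nat k :: 'b::linordered_field))"
  proof (rule sum_bounded_below)
    fix i assume i: "i \<in> {m..<2*m}"
    then have "(of_nat i :: 'b::linordered_field) \<le> of_nat (2*m)" by (simp only: of_nat_le_iff) auto
    moreover have "(0::'b) < of_nat i" using i assms by simp
    ultimately show "1 / (of_nat (2*m) :: 'b::linordered_field) \<le> 1 / of_nat i"
      by (intro frac_le) auto
  qed
  moreover have "(of_nat (card {m..<2*m}) :: 'b::linordered_field) * (1 / (of_nat (2*m) :: 'b::linordered_field)) = 1/2" using assms by simp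
  ultimately show ?thesis by simp
qed

lemma block_one:
  assumes "m \<ge> 1"
  shows "(\<Sum>k\<in>{m..<4*m}. 1 / (of_nat k :: 'b::linordered_field)) \<ge> 1"
proof -
  have "(\<Sum>k\<in>{m..<2*m}. 1 / (of_nat k :: 'b::linordered_field)) + (\<Sum>k\<in>{2*m..<2*(2*m)}. 1 / (of_nat k :: 'b::linordered_field)) = (\<Sum>k\<in>{m..<4*m}. 1 / (of_nat k :: 'b::linordered_field))"
    by (subst sum.atLeastLessThan_concat) auto
  moreover have "(\<Sum>k\<in>{m..<2*m}. 1 / (of_nat k :: 'b::linordered_field)) \<ge> 1/2" using block_half assms by blast
  moreover have "(\<Sum>k\<in>{2*m..<2*(2*m)}. 1 / (of_nat k :: 'b::linordered_field)) \<ge> 1/2" using block_half[of "2*m"] assms by simp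
  ultimately show ?thesis by simp
qed

lemma rat_sum:
  "finite K \<Longrightarrow> 0 \<notin> K \<Longrightarrow> \<exists>a c. c > 0 \<and> (\<Sum>k\<in>K. 1 / (of_nat k :: 'b::linordered_field)) = (of_nat a :: 'b::linordered_field) / (of_nat c :: 'b::linordered_field)"
proof (induction K rule: finite_induct)
  case empty
  then show ?case by (intro exI[of _ 0] exI[of _ 1]) simp
next
  case (insert k K)
  then obtain a c where ac: "c > 0" "(\<Sum>k\<in>K. 1 / (of_nat k :: 'b::linordered_field)) = (of_nat a :: 'b::linordered_field) / (of_nat c :: 'b::linordered_field)" by auto
  have k0: "k > 0" using insert by auto
  have "(\<Sum>k\<in>insert k K. 1 / (of_nat k :: 'b::linordered_field)) = (of_nat (a*k + c) :: 'b::linordered_field) / (of_nat (c*k) :: 'b::linordered_field)"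
    using insert ac k0 by (simp add: field_simps)
  then show ?case using ac k0 by (intro exI[of _ "a*k+c"] exI[of _ "c*k"]) simp
qed

lemma unit_sum_large:
  assumes M: "M \<ge> 2"
  shows "\<exists>S. finite S \<and> (\<forall>n\<in>S. n \<ge> M) \<and> (\<Sum>n\<in>S. 1 / (of_nat n :: 'b::linordered_field)) = 1"
proof -
  define P where "P = (\<lambda>N. 1 \<le> (\<Sum>k\<in>{M..<N}. 1 / (of_nat k :: 'b::linordered_field)))"
  have ex: "P (4*M)" unfolding P_def using block_one[of M] M by simp
  define N where "N = (LEAST N. P N)"
  have PN: "P N" unfolding N_def by (rule LeastI[of _ "4*M"]) (rule ex)
  have NM: "N > M + 1"
  proof (rule ccontr)
    assume "\<not> N > M + 1"
    then have "N \<le> M \<or> N = M + 1" by auto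
    then show False
    proof
      assume "N \<le> M" then show False using PN unfolding P_def by simp
    next
      assume "N = M + 1" then show False using PN M unfolding P_def by simp
    qed
  qed
  have notP: "\<not> P (N - 1)" unfolding N_def
    by (rule not_less_Least) (use NM N_def in simp)
  define K where "K = {M..<N-1}"
  have K0: "0 \<notin> K" "finite K" unfolding K_def using M by auto
  obtain a c where ac: "c > 0" "(\<Sum>k\<in>K. 1 / (of_nat k :: 'b::linordered_field)) = (of_nat a :: 'b::linordered_field) / (of_nat c :: 'b::linordered_field)" using rat_sum[OF K0(2,1)] by blast
  have lt1: "(of_nat a :: 'b::linordered_field) / (of_nat c :: 'b::linordered_field) < 1" using notP ac unfolding P_def K_def by simp
  then have alc: "a < c" using ac by (simp add: divide_less_eq)
  have split: "(\<Sum>k\<in>{M..<N}. 1 / (of_nat k :: 'b::linordered_field)) = (\<Sum>k\<in>K. 1 / (of_nat k :: 'b::linordered_field)) + 1 / (of_nat (N - 1) :: 'b::linordered_field)"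
  proof -
    have "(\<Sum>k\<in>{M..<N}. 1 / (of_nat k :: 'b::linordered_field)) = (\<Sum>k\<in>{M..<N-1}. 1 / (of_nat k :: 'b::linordered_field)) + (\<Sum>k\<in>{N-1..<N}. 1 / (of_nat k :: 'b::linordered_field))"
      using NM by (intro sum.atLeastLessThan_concat[symmetric]) auto
    moreover have "{N-1..<N} = {N-1}" using NM by auto
    ultimately show ?thesis unfolding K_def by simp
  qed
  have r_le: "1 - (of_nat a :: 'b::linordered_field) / (of_nat c :: 'b::linordered_field) \<le> 1 / (of_nat (N - 1) :: 'b::linordered_field)" using PN split ac unfolding P_def by simp
  have cond: "(c - a) * (N - 2) < c"
  proof -
    have "(of_nat (c - a) :: 'b::linordered_field) / (of_nat c :: 'b::linordered_field) \<le> 1 / (of_nat (N - 1) :: 'b::linordered_field)" using r_le alc ac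
      by (simp add: of_nat_diff diff_divide_distrib)
    moreover have gen: "\<And>x y z::'b::linordered_field. z>0 \<Longrightarrow> y>0 \<Longrightarrow> x/z \<le> 1/y \<Longrightarrow> x*y \<le> z"
      by (simp add: field_simps)
    ultimately have "(of_nat (c - a) :: 'b::linordered_field) * (of_nat (N - 1) :: 'b::linordered_field) \<le> (of_nat c :: 'b::linordered_field)" using ac NM by (intro gen) auto
    moreover have "(of_nat (c - a) :: 'b::linordered_field) * (of_nat (N - 2) :: 'b::linordered_field) < (of_nat (c - a) :: 'b::linordered_field) * (of_nat (N - 1) :: 'b::linordered_field)"
      using alc NM by (intro mult_strict_left_mono) auto
    ultimately have "(of_nat (c - a) :: 'b::linordered_field) * (of_nat (N - 2) :: 'b::linordered_field) < (of_nat c :: 'b::linordered_field)" by linarith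
    then have "(of_nat ((c - a) * (N - 2)) :: 'b::linordered_field) < (of_nat c :: 'b::linordered_field)" by (simp only: of_nat_mult)
    then show ?thesis by (simp only: of_nat_less_iff)
  qed
  have N2: "N - 2 \<ge> 1" using NM M by simp
  obtain S' where S': "finite S'" "\<forall>n\<in>S'. n > N - 2" "(\<Sum>n\<in>S'. 1 / (of_nat n :: 'b::linordered_field)) = (of_nat (c - a) :: 'b::linordered_field) / (of_nat c :: 'b::linordered_field)"
    using greedy_nat[OF ac(1) N2 cond] by blast
  have Kb: "\<forall>x\<in>K. x \<le> N - 2" unfolding K_def by auto
  have disj: "K \<inter> S' = {}" using Kb S'(2) by (meson disjoint_iff not_less)
  have "(\<Sum>n\<in>K \<union> S'. 1 / (of_nat n :: 'b::linordered_field)) = (of_nat a :: 'b::linordered_field) / (of_nat c :: 'b::linordered_field) + (of_nat (c - a) :: 'b::linordered_field) / (of_nat c :: 'b::linordered_field)"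
    by (simp only: sum.union_disjoint[OF K0(2) S'(1) disj] ac(2) S'(3))
  also have "\<dots> = 1" using alc ac by (simp add: of_nat_diff field_simps)
  finally have sum1: "(\<Sum>n\<in>K \<union> S'. 1 / (of_nat n :: 'b::linordered_field)) = 1" .
  have Kge: "\<forall>x\<in>K. x \<ge> M" unfolding K_def by auto
  have Sge: "\<forall>x\<in>S'. x \<ge> M" using S'(2) NM by fastforce
  have "\<forall>x\<in>K \<union> S'. x \<ge> M" using Kge Sge by blast
  then show ?thesis using sum1 K0(2) S'(1) by blast
qed



lemma transfer_field:
  assumes ch: "\<forall>n>0. of_nat n \<noteq> (0::'b::field)"
    and S: "finite S" "0 \<notin> S" "(\<Sum>n\<in>S. 1 / (of_nat n :: int fract)) = 1"
  shows "(\<Sum>n\<in>S. inverse (of_nat n :: 'b)) = 1"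
proof -
  define P where "P = (\<Prod>n\<in>S. n)"
  have pos: "\<forall>n\<in>S. n > 0" using S(2) by (metis gr0I)
  have P0: "P > 0" unfolding P_def by (intro prod_pos) (use pos in auto)
  have dv: "\<And>n. n \<in> S \<Longrightarrow> n dvd P" unfolding P_def using S(1) by (rule dvd_prodI)
  have "(\<Sum>n\<in>S. (of_nat (P div n) :: int fract)) = (\<Sum>n\<in>S. of_nat P * (1 / of_nat n))"
  proof (rule sum.cong)
    fix n assume n: "n \<in> S"
    have "P div n * n = P" using dv[OF n] by simp
    then have "(of_nat (P div n) :: int fract) * of_nat n = of_nat P" by (metis of_nat_mult)
    moreover have "(of_nat n :: int fract) \<noteq> 0" using n S(2) by (metis of_nat_eq_0_iff)
    ultimately show "(of_nat (P div n) :: int fract) = of_nat P * (1 / of_nat n)"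
      by (simp add: field_simps)
  qed simp
  also have "\<dots> = of_nat P" by (simp only: sum_distrib_left[symmetric] S(3) mult_1_right)
  finally have "(of_nat (\<Sum>n\<in>S. P div n) :: int fract) = of_nat P" by simp
  then have natid: "(\<Sum>n\<in>S. P div n) = P" by (simp only: of_nat_eq_iff)
  have P0': "(of_nat P :: 'b) \<noteq> 0" using ch P0 by blast
  have "(\<Sum>n\<in>S. inverse (of_nat n :: 'b)) = (\<Sum>n\<in>S. of_nat (P div n) / of_nat P)"
  proof (rule sum.cong)
    fix n assume n: "n \<in> S"
    have n0: "(of_nat n :: 'b) \<noteq> 0" using ch S(2) n by (metis gr0I)
    have "P div n * n = P" using dv[OF n] by simp
    then have "(of_nat (P div n) :: 'b) * of_nat n = of_nat P" by (metis of_nat_mult)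
    then show "inverse (of_nat n :: 'b) = of_nat (P div n) / of_nat P"
      using n0 P0' by (simp add: field_simps)
  qed simp
  also have "\<dots> = of_nat (\<Sum>n\<in>S. P div n) / of_nat P" by (simp add: sum_divide_distrib)
  also have "\<dots> = 1" using natid P0' by simp
  finally show ?thesis .
qed

abbreviation esum :: "'a::idom set \<Rightarrow> 'a fract" where
  "esum E \<equiv> (\<Sum>d\<in>E. inverse (Fract d 1))"

lemma two_fract: "(2 :: 'a::idom fract) = Fract (1 + 1) 1"
proof -
  have "(2 :: 'a fract) = 1 + 1" by simp
  also have "\<dots> = Fract 1 1 + Fract 1 1" by (simp add: One_fract_def)
  also have "\<dots> = Fract (1 + 1) 1" by simp
  finally show ?thesis .
qed

lemma egyptianI: "finite S \<Longrightarrow> 0 \<notin> S \<Longrightarrow> \<alpha> = esum S \<Longrightarrow> egyptian \<alpha>"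
  unfolding egyptian_def by blast

lemma merge_unit:
  fixes u x :: "'a::idom" and E :: "'a set"
  assumes u: "(1 + 1) * u = 1"
  shows "finite E \<Longrightarrow> 0 \<notin> E \<Longrightarrow> x \<noteq> 0 \<Longrightarrow> x \<notin> E \<Longrightarrow>
    egyptian (2 * inverse (Fract x 1) + esum E)"
proof (induction "card E" arbitrary: E x rule: less_induct)
  case less
  define y where "y = x * u"
  have u0: "u \<noteq> 0" using u by auto
  have y0: "y \<noteq> 0" unfolding y_def using less.prems u0 by simp
  have iy: "inverse (Fract y 1) = 2 * inverse (Fract x 1)"
  proof -
    have "2 * inverse (Fract x 1) = Fract (1+1) 1 * Fract 1 x" by (simp only: two_fract inverse_fract)
    also have "\<dots> = Fract ((1+1)*1) (1*x)" by (rule mult_fract)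
    finally have e2: "2 * inverse (Fract x 1) = Fract ((1+1)*1) (1*x)" .
    have "1 * (1 * x) = ((1 + 1) * 1) * (x * u)" using u by (simp add: algebra_simps)
    moreover have "Fract 1 (x*u) = Fract ((1+1)*1) (1*x) \<longleftrightarrow> 1*(1*x) = ((1+1)*1)*(x*u)"
      by (rule eq_fract(1)) (use less.prems u0 in auto)
    ultimately have "Fract 1 y = Fract ((1 + 1)*1) (1*x)" unfolding y_def by blast
    then show ?thesis using e2 by simp
  qed
  show ?case
  proof (cases "y \<in> E")
    case False
    have "2 * inverse (Fract x 1) + esum E = esum (insert y E)" using False less.prems iy by simp
    then show ?thesis using less.prems y0 by (intro egyptianI[of "insert y E"]) auto
  next
    case True
    have "esum E = inverse (Fract y 1) + esum (E - {y})"
      using True less.prems by (simp add: sum.remove)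
    then have eq: "2 * inverse (Fract x 1) + esum E = 2 * inverse (Fract y 1) + esum (E - {y})"
      using iy by simp
    have "card (E - {y}) < card E" using True less.prems by (metis card_Diff1_less)
    then have "egyptian (2 * inverse (Fract y 1) + esum (E - {y}))"
      using less.hyps[of "E - {y}" y] less.prems y0 by auto
    then show ?thesis using eq by simp
  qed
qed

lemma of_nat_inj_char0:
  assumes ch: "\<forall>n>0. of_nat n \<noteq> (0::'a::idom)"
  shows "of_nat m = (of_nat n :: 'a) \<Longrightarrow> m = n"
proof (rule ccontr)
  assume e: "of_nat m = (of_nat n :: 'a)" and ne: "m \<noteq> n"
  show False
  proof (cases "m < n")
    case True
    have "(of_nat n :: 'a) = of_nat m + of_nat (n - m)" using True by (metis le_add_diff_inverse less_imp_le of_nat_add)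
    then have "(of_nat (n - m) :: 'a) = 0" using e by (metis add_cancel_right_right)
    then show False using ch True by (metis zero_less_diff)
  next
    case False
    then have lt: "n < m" using ne by simp
    have "(of_nat m :: 'a) = of_nat n + of_nat (m - n)" using lt by (metis le_add_diff_inverse less_imp_le of_nat_add)
    then have "(of_nat (m - n) :: 'a) = 0" using e by (metis add_cancel_right_right)
    then show False using ch lt by (metis zero_less_diff)
  qed
qed

lemma merge_char0:
  fixes x :: "'a::idom" and E :: "'a set"
  assumes ch: "\<forall>n>0. of_nat n \<noteq> (0::'a)"
    and E: "finite E" "0 \<notin> E" and x: "x \<noteq> 0" "x \<notin> E"
  shows "egyptian (2 * inverse (Fract x 1) + esum E)"
proof -
  define h where "h = (\<lambda>n::nat. of_nat n * x)"
  have injh: "inj h"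
  proof (rule injI)
    fix m n assume "h m = h n"
    then have "(of_nat m :: 'a) = of_nat n" unfolding h_def using x(1) by simp
    then show "m = n" by (rule of_nat_inj_char0[OF ch])
  qed
  define B0 where "B0 = h -` E"
  have finB: "finite B0" unfolding B0_def by (rule finite_vimageI[OF E(1) injh])
  define M where "M = Max (insert 1 B0) + 1"
  have M2: "M \<ge> 2" unfolding M_def using finB by (simp add: Max_ge_iff)
  have BM: "\<forall>b\<in>B0. b < M" unfolding M_def using finB by (simp add: le_imp_less_Suc)
  obtain S where S: "finite S" "\<forall>n\<in>S. n \<ge> M" "(\<Sum>n\<in>S. 1 / (of_nat n :: int fract)) = 1"
    using unit_sum_large[OF M2] by blast
  have S0: "0 \<notin> S" using S(2) M2 by fastforce
  have S1: "1 \<notin> S" using S(2) M2 by fastforce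
  have SB: "\<forall>n\<in>S. h n \<notin> E"
  proof (intro ballI notI)
    fix n assume n: "n \<in> S" "h n \<in> E"
    then have "n \<in> B0" by (simp add: B0_def)
    then have "n < M" using BM by blast
    then show False using S(2) n(1) by force
  qed
  have chf: "\<forall>n>0. of_nat n \<noteq> (0::'a fract)"
  proof (intro allI impI)
    fix n :: nat assume "n > 0"
    then have "(of_nat n :: 'a) \<noteq> 0" using ch by blast
    then show "of_nat n \<noteq> (0::'a fract)" by (simp add: of_nat_fract Zero_fract_def eq_fract)
  qed
  have sumS: "(\<Sum>n\<in>S. inverse (of_nat n :: 'a fract)) = 1"
    by (rule transfer_field[OF chf S(1) S0 S(3)])
  have hS: "esum (h ` S) = inverse (Fract x 1)"
  proof -
    have "esum (h ` S) = (\<Sum>n\<in>S. inverse (Fract (h n) 1))"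
      using sum.reindex[of h S "\<lambda>d. inverse (Fract d 1)"] injh by (simp add: inj_on_def inj_def)
    also have "\<dots> = (\<Sum>n\<in>S. inverse (of_nat n :: 'a fract) * inverse (Fract x 1))"
    proof (rule sum.cong)
      fix n assume "n \<in> S"
      have "Fract (h n) 1 = Fract (of_nat n) 1 * Fract x 1" unfolding h_def by simp
      also have "\<dots> = of_nat n * Fract x 1" by (simp add: of_nat_fract)
      finally show "inverse (Fract (h n) 1) = inverse (of_nat n :: 'a fract) * inverse (Fract x 1)"
        by (simp add: inverse_mult_distrib)
    qed simp
    also have "\<dots> = inverse (Fract x 1)" using sumS by (simp add: sum_distrib_right[symmetric])
    finally show ?thesis .
  qed
  have xh: "x \<notin> h ` S"
  proof
    assume "x \<in> h ` S"
    then obtain n where n: "n \<in> S" "x = h n" by blast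
    then have "h 1 = h n" unfolding h_def by simp
    then have "n = 1" using injh by (simp add: inj_def)
    then show False using n S1 by simp
  qed
  have disj: "E \<inter> h ` S = {}" using SB by blast
  have h0: "0 \<notin> h ` S"
  proof
    assume "0 \<in> h ` S"
    then obtain n where n: "n \<in> S" "0 = h n" by blast
    have "n > 0" using n S0 by (metis gr0I)
    then have "(of_nat n :: 'a) \<noteq> 0" using ch by blast
    then show False using n x unfolding h_def by simp
  qed
  have finT: "finite (E \<union> h ` S)" using E S by simp
  have "esum (insert x (E \<union> h ` S)) = inverse (Fract x 1) + esum (E \<union> h ` S)"
    using finT xh x by simp
  also have "esum (E \<union> h ` S) = esum E + esum (h ` S)"
    using sum.union_disjoint[OF E(1) _ disj] S(1) by simp
  finally have "esum (insert x (E \<union> h ` S)) = 2 * inverse (Fract x 1) + esum E"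
    using hS by (simp add: algebra_simps)
  then show ?thesis using finT E h0 x
    by (intro egyptianI[of "insert x (E \<union> h ` S)"]) auto
qed

lemma char0_of_cases:
  assumes t: "(1::'a::idom) + 1 \<noteq> 0" and nu: "\<not> (\<exists>u. (1 + 1) * u = (1::'a))"
  shows "\<forall>n>0. of_nat n \<noteq> (0::'a)"
proof -
  have "n > 0 \<longrightarrow> of_nat n \<noteq> (0::'a)" for n
  proof (induction n rule: less_induct)
    case (less n)
    show ?case
    proof (intro impI notI)
      assume n0: "n > 0" and z: "(of_nat n :: 'a) = 0"
      show False
      proof (cases "even n")
        case True
        define m where "m = n div 2"
        have nm: "n = 2 * m" unfolding m_def using True by simp
        have "(of_nat n :: 'a) = (1 + 1) * of_nat m" unfolding nm by (simp add: algebra_simps)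
        then have "(of_nat m :: 'a) = 0" using z t by simp
        moreover have "m > 0" "m < n" using nm n0 by auto
        ultimately show False using less.IH by blast
      next
        case False
        define m where "m = n div 2"
        have nm: "n = 2 * m + 1" unfolding m_def using False by simp
        have "(of_nat n :: 'a) = (1 + 1) * of_nat m + 1" unfolding nm by (simp add: algebra_simps)
        then have hh: "(1 + 1) * of_nat m + 1 = (0::'a)" using z by simp
        have "(1 + 1) * (- of_nat m) = (1::'a)" using hh by (metis add_eq_0_iff mult_minus_right)
        then show False using nu by blast
      qed
    qed
  qed
  then show ?thesis by blast
qed

lemma merge_two:
  fixes x :: "'a::idom" and E :: "'a set"
  assumes E: "finite E" "0 \<notin> E" and x: "x \<noteq> 0" "x \<notin> E"
  shows "egyptian (2 * inverse (Fract x 1) + esum E)"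
proof (cases "(1::'a) + 1 = 0")
  case True
  have "(2::'a fract) = 0" using two_fract[where 'a='a] True by (simp add: Zero_fract_def)
  then show ?thesis using E by (intro egyptianI[of E]) auto
next
  case t: False
  show ?thesis
  proof (cases "\<exists>u. (1 + 1) * u = (1::'a)")
    case True
    then obtain u where "(1 + 1) * u = (1::'a)" by blast
    then show ?thesis using merge_unit E x by blast
  next
    case False
    show ?thesis using merge_char0[OF char0_of_cases[OF t False] E x] .
  qed
qed

lemma list_egyptian:
  fixes xs :: "'a::idom list"
  shows "0 \<notin> set xs \<Longrightarrow> egyptian (\<Sum>x\<leftarrow>xs. inverse (Fract x 1))"
proof (induction xs)
  case Nil
  then show ?case by (intro egyptianI[of "{}"]) auto
next
  case (Cons x xs)
  then obtain E where E: "finite E" "0 \<notin> E" "(\<Sum>x\<leftarrow>xs. inverse (Fract x 1)) = esum E"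
    unfolding egyptian_def by auto
  have x0: "x \<noteq> 0" using Cons.prems by auto
  show ?case
  proof (cases "x \<in> E")
    case False
    then show ?thesis using E x0 by (intro egyptianI[of "insert x E"]) auto
  next
    case True
    have "esum E = inverse (Fract x 1) + esum (E - {x})" using True E by (simp add: sum.remove)
    then have "(\<Sum>x\<leftarrow>x # xs. inverse (Fract x 1)) = 2 * inverse (Fract x 1) + esum (E - {x})"
      using E by simp
    moreover have "egyptian (2 * inverse (Fract x 1) + esum (E - {x}))"
      using merge_two[of "E - {x}" x] E x0 by auto
    ultimately show ?thesis by simp
  qed
qed


theorem theorem2p7:
  assumes "euclidean_domain TYPE('a::idom)"
  shows "bonaccian TYPE('a) \<and>
    (\<forall>f :: 'a \<Rightarrow> int. euclidean_function f \<longrightarrow>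
       (\<forall>a b. a \<noteq> 0 \<longrightarrow> b \<noteq> 0 \<longrightarrow> f a \<le> f b \<longrightarrow> egyptian (Fract a b)))"
proof -
  have P2: "\<forall>f :: 'a \<Rightarrow> int. euclidean_function f \<longrightarrow>
       (\<forall>a b. a \<noteq> 0 \<longrightarrow> b \<noteq> 0 \<longrightarrow> f a \<le> f b \<longrightarrow> egyptian (Fract a b))"
  proof (intro allI impI)
    fix f :: "'a \<Rightarrow> int" and a b :: 'a
    assume ef: "euclidean_function f" and ab: "a \<noteq> 0" "b \<noteq> 0" "f a \<le> f b"
    obtain xs where xs: "0 \<notin> set xs" "Fract a b = (\<Sum>x\<leftarrow>xs. inverse (Fract x 1))"
      using greedy[OF ef ab] by blast
    show "egyptian (Fract a b)" using list_egyptian[OF xs(1)] xs(2) by simp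
  qed
  obtain f :: "'a \<Rightarrow> int" where ef: "euclidean_function f"
    using assms unfolding euclidean_domain_def by blast
  have "bonaccian TYPE('a)"
    unfolding bonaccian_def
  proof (intro allI impI)
    fix \<alpha> :: "'a fract" assume a0: "\<alpha> \<noteq> 0"
    then obtain a b where ab: "\<alpha> = Fract a b" "b \<noteq> 0" "a \<noteq> 0"
      by (cases \<alpha> rule: Fract_cases_nonzero) auto
    show "egyptian \<alpha> \<or> egyptian (inverse \<alpha>)"
    proof (cases "f a \<le> f b")
      case True
      then show ?thesis using P2 ef ab by blast
    next
      case False
      then have "egyptian (Fract b a)" using P2 ef ab by auto
      then show ?thesis using ab by simp
    qed
  qed
  then show ?thesis using P2 by blast
qed

end
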